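(* Let $m$ be a positive integer. If $D$ is a quaternary extremal Hermitian self-dual code of length $6m$, then $B_{2i}\equiv 0 \pmod 9$ for every $i=m+1,m+2,\ldots,3m$, where $B_{j}$ denotes the number of codewords of weight $j$ in $D$.
   Context: Let $\mathbb{F}_4=\{0,1,\omega,\omega^2\}$ with $\omega^2=\omega+1$. A quaternary code of length $n$ is a linear subspace of $\mathbb{F}_4^n$; it is Hermitian self-dual if it equals its dual with respect to $\langle x,y\rangle_H=\sum_k x_k y_k^2$. The weight of a vector is the number of its nonzero coordinates. A quaternary Hermitian self-dual code of length $n$ is extremal if its minimum (nonzero) weight equals $2\lfloor n/6\rfloor+2$; for length $6m$ this is $2m+2$. *)

theory Defs
  imports Main
begin

datatype f4 = F0 | F1 | Fw | Fw2

fun f4_add :: "f4 \<Rightarrow> f4 \<Rightarrow> f4" where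
  "f4_add F0 y = y"
| "f4_add x F0 = x"
| "f4_add F1 F1 = F0" | "f4_add F1 Fw = Fw2" | "f4_add F1 Fw2 = Fw"
| "f4_add Fw F1 = Fw2" | "f4_add Fw Fw = F0" | "f4_add Fw Fw2 = F1"
| "f4_add Fw2 F1 = Fw" | "f4_add Fw2 Fw = F1" | "f4_add Fw2 Fw2 = F0"

fun f4_mult :: "f4 \<Rightarrow> f4 \<Rightarrow> f4" where
  "f4_mult F0 y = F0"
| "f4_mult x F0 = F0"
| "f4_mult F1 y = y"
| "f4_mult x F1 = x"
| "f4_mult Fw Fw = Fw2" | "f4_mult Fw Fw2 = F1"
| "f4_mult Fw2 Fw = F1" | "f4_mult Fw2 Fw2 = Fw"

fun f4_inv :: "f4 \<Rightarrow> f4" where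
  "f4_inv F0 = F0" | "f4_inv F1 = F1" | "f4_inv Fw = Fw2" | "f4_inv Fw2 = Fw"

instantiation f4 :: field
begin
definition zero_f4 :: f4 where "zero_f4 = F0"
definition one_f4 :: f4 where "one_f4 = F1"
definition plus_f4 :: "f4 \<Rightarrow> f4 \<Rightarrow> f4" where "plus_f4 = f4_add"
definition times_f4 :: "f4 \<Rightarrow> f4 \<Rightarrow> f4" where "times_f4 = f4_mult"
definition uminus_f4 :: "f4 \<Rightarrow> f4" where "uminus_f4 = (\<lambda>x. x)"
definition minus_f4 :: "f4 \<Rightarrow> f4 \<Rightarrow> f4" where "minus_f4 = f4_add"
definition inverse_f4 :: "f4 \<Rightarrow> f4" where "inverse_f4 = f4_inv"
definition divide_f4 :: "f4 \<Rightarrow> f4 \<Rightarrow> f4" where "divide_f4 = (\<lambda>x y. f4_mult x (f4_inv y))"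
instance
  apply standard
  apply (unfold zero_f4_def one_f4_def plus_f4_def times_f4_def uminus_f4_def minus_f4_def
       inverse_f4_def divide_f4_def)
  subgoal for a b c by (cases a; cases b; cases c) auto
  subgoal for a b by (cases a; cases b) auto
  subgoal for a by (cases a) auto
  subgoal for a b c by (cases a; cases b; cases c) auto
  subgoal for a b by (cases a; cases b) auto
  subgoal for a by (cases a) auto
  subgoal for a by (cases a) auto
  subgoal for a b by (cases a; cases b) auto
  subgoal for a b c by (cases a; cases b; cases c) auto
  subgoal by simp
  subgoal for a by (cases a) auto
  subgoal for a b by (cases a; cases b) auto
  subgoal by simp
  done
end

definition vecs :: "nat \<Rightarrow> (nat \<Rightarrow> f4) set" where
  "vecs n = {x. \<forall>k. n \<le> k \<longrightarrow> x k = 0}"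

definition is_code :: "nat \<Rightarrow> (nat \<Rightarrow> f4) set \<Rightarrow> bool" where
  "is_code n C \<longleftrightarrow> C \<subseteq> vecs n \<and> (\<lambda>_. 0) \<in> C
     \<and> (\<forall>x\<in>C. \<forall>y\<in>C. (\<lambda>k. x k + y k) \<in> C)
     \<and> (\<forall>a. \<forall>x\<in>C. (\<lambda>k. a * x k) \<in> C)"

definition herm_ip :: "nat \<Rightarrow> (nat \<Rightarrow> f4) \<Rightarrow> (nat \<Rightarrow> f4) \<Rightarrow> f4" where
  "herm_ip n x y = (\<Sum>k<n. x k * (y k)^2)"

definition herm_dual :: "nat \<Rightarrow> (nat \<Rightarrow> f4) set \<Rightarrow> (nat \<Rightarrow> f4) set" where
  "herm_dual n C = {y \<in> vecs n. \<forall>x\<in>C. herm_ip n x y = 0}"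

definition herm_self_dual :: "nat \<Rightarrow> (nat \<Rightarrow> f4) set \<Rightarrow> bool" where
  "herm_self_dual n C \<longleftrightarrow> is_code n C \<and> herm_dual n C = C"

definition wt :: "nat \<Rightarrow> (nat \<Rightarrow> f4) \<Rightarrow> nat" where
  "wt n x = card {k. k < n \<and> x k \<noteq> 0}"

definition min_weight :: "nat \<Rightarrow> (nat \<Rightarrow> f4) set \<Rightarrow> nat" where
  "min_weight n C = Min (wt n ` (C - {\<lambda>_. 0}))"

definition extremal_herm_sd :: "nat \<Rightarrow> (nat \<Rightarrow> f4) set \<Rightarrow> bool" where
  "extremal_herm_sd n C \<longleftrightarrow> herm_self_dual n C \<and> min_weight n C = 2 * (n div 6) + 2"

definition weight_count :: "nat \<Rightarrow> (nat \<Rightarrow> f4) set \<Rightarrow> nat \<Rightarrow> nat" where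
  "weight_count n C j = card {x \<in> C. wt n x = j}"

end

theory Submission
  imports Defs "HOL-Computational_Algebra.Computational_Algebra" "HOL-Computational_Algebra.Field_as_Ring" "HOL-Library.FuncSet"
begin


definition Inv :: "nat \<Rightarrow> real poly \<Rightarrow> bool" where
  "Inv n p \<longleftrightarrow> (\<forall>t. 1 + 3*t \<noteq> 0 \<longrightarrow>
      2^n * poly p t = (1 + 3*t)^n * poly p ((1 - t)/(1 + 3*t)))"

definition homz :: "nat \<Rightarrow> real poly \<Rightarrow> real poly" where
  "homz d r = (\<Sum>i\<le>d. smult (coeff r i) ([:1,3:]^(d-i) * [:1,-1:]^i))"

lemma poly_upto:
  fixes p :: "real poly"
  assumes "degree p \<le> d"
  shows "poly p x = (\<Sum>i\<le>d. coeff p i * x ^ i)"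
proof -
  have "poly p x = (\<Sum>i\<le>degree p. coeff p i * x ^ i)" by (rule poly_altdef)
  also have "\<dots> = (\<Sum>i\<le>d. coeff p i * x ^ i)"
    using assms by (intro sum.mono_neutral_left) (auto simp: coeff_eq_0)
  finally show ?thesis .
qed

lemma poly_homz:
  assumes "degree r \<le> d" "1 + 3*t \<noteq> (0::real)"
  shows "poly (homz d r) t = (1+3*t)^d * poly r ((1-t)/(1+3*t))"
proof -
  have "poly (homz d r) t = (\<Sum>i\<le>d. coeff r i * ((1+3*t)^(d-i) * (1-t)^i))"
    by (simp add: homz_def poly_sum ac_simps)
  also have "\<dots> = (\<Sum>i\<le>d. (1+3*t)^d * (coeff r i * ((1-t)/(1+3*t))^i))"
  proof (intro sum.cong refl)
    fix i assume "i \<in> {..d}"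
    then have "(1+3*t)^d = (1+3*t)^(d-i) * (1+3*t)^i"
      by (simp add: power_add[symmetric])
    then show "coeff r i * ((1+3*t)^(d-i) * (1-t)^i) = (1+3*t)^d * (coeff r i * ((1-t)/(1+3*t))^i)"
      using assms(2) by (simp add: power_divide field_simps)
  qed
  also have "\<dots> = (1+3*t)^d * poly r ((1-t)/(1+3*t))"
    by (simp add: poly_upto[OF assms(1)] sum_distrib_left)
  finally show ?thesis .
qed

lemma poly_eq_except:
  fixes P Q :: "real poly"
  assumes "\<And>t. t \<noteq> a \<Longrightarrow> poly P t = poly Q t"
  shows "P = Q"
proof (rule ccontr)
  assume "P \<noteq> Q"
  then have "P - Q \<noteq> 0" by simp
  then have "finite {x. poly (P - Q) x = 0}" by (rule poly_roots_finite)
  moreover have "UNIV - {a} \<subseteq> {x. poly (P - Q) x = 0}" using assms by auto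
  ultimately have "finite (UNIV - {a} :: real set)" by (rule finite_subset[rotated])
  then show False by (simp add: infinite_UNIV_char_0)
qed

lemma coprime_lin:
  fixes a b :: "real poly"
  assumes "smult u a + smult v b = 1"
  shows "coprime a b"
proof (rule coprimeI)
  fix c assume "c dvd a" "c dvd b"
  then have "c dvd smult u a + smult v b"
    by (simp add: dvd_add dvd_smult)
  then show "is_unit c" using assms by simp
qed

lemma uniq:
  assumes inv: "Inv n p" and deg: "degree p \<le> n"
    and ev: "\<And>i. odd i \<Longrightarrow> coeff p i = 0"
    and low: "\<And>i. i < k \<Longrightarrow> coeff p i = 0"
    and nk: "n < 3*k"
  shows "p = 0"
proof (rule ccontr)
  assume pnz: "p \<noteq> 0"
  have kn: "k \<le> n"
  proof (rule ccontr)
    assume "\<not> k \<le> n"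
    then have "\<forall>i. coeff p i = 0"
      using low deg by (metis coeff_eq_0 le_less_trans not_le)
    then show False using pnz by (simp add: poly_eq_iff)
  qed
  have "monom 1 k dvd p" using low by (simp add: monom_1_dvd_iff')
  then obtain r where r: "p = monom 1 k * r" by (erule dvdE)
  have rnz: "r \<noteq> 0" using pnz r by auto
  have degr: "degree r \<le> n - k"
    using deg r rnz by (simp add: degree_mult_eq degree_monom_eq)
  have A: "smult (2^n) p = [:1,-1:]^k * homz (n-k) r"
  proof (rule poly_eq_except[where a="-1/3"])
    fix t :: real assume "t \<noteq> -1/3"
    then have t: "1 + 3*t \<noteq> 0" by auto
    have "poly (smult (2^n) p) t = (1 + 3*t)^n * poly p ((1 - t)/(1 + 3*t))"
      using inv t by (simp add: Inv_def)
    also have "\<dots> = (1 + 3*t)^((n-k)+k) * (((1 - t)/(1 + 3*t))^k * poly r ((1 - t)/(1 + 3*t)))"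
      using kn by (simp add: r poly_monom)
    also have "\<dots> = (1-t)^k * ((1+3*t)^(n-k) * poly r ((1 - t)/(1 + 3*t)))"
      using t by (simp add: power_add power_divide field_simps)
    also have "\<dots> = poly ([:1,-1:]^k * homz (n-k) r) t"
      using poly_homz[OF degr t] by simp
    finally show "poly (smult (2^n) p) t = poly ([:1,-1:]^k * homz (n-k) r) t" .
  qed
  have d1: "[:1,-1:]^k dvd p"
  proof -
    have "[:1,-1:]^k dvd smult (2^n) p" using A by simp
    then show ?thesis by (simp add: dvd_smult_iff)
  qed
  then obtain S where S: "p = [:1,-1:]^k * S" by (erule dvdE)
  have peven: "poly p (-t) = poly p t" for t
  proof -
    have "poly p (-t) = (\<Sum>i\<le>degree p. coeff p i * (-t) ^ i)" by (rule poly_altdef)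
    also have "\<dots> = (\<Sum>i\<le>degree p. coeff p i * t ^ i)"
      by (intro sum.cong refl) (metis ev mult_zero_left power_minus_even)
    finally show ?thesis by (simp add: poly_altdef)
  qed
  have d2: "[:1,1:]^k dvd p"
  proof -
    have "p = [:1,1:]^k * pcompose S [:0,-1:]"
    proof (rule poly_eq_except[where a=0])
      fix t :: real
      have "poly p t = poly p (-t)" by (rule peven[symmetric])
      also have "\<dots> = poly ([:1,1:]^k * pcompose S [:0,-1:]) t"
        by (simp add: S poly_pcompose)
      finally show "poly p t = poly ([:1,1:]^k * pcompose S [:0,-1:]) t" .
    qed
    then show ?thesis by (metis dvd_triv_left)
  qed
  have d0: "[:0,1:]^k dvd p"
    using \<open>monom 1 k dvd p\<close> by (simp add: monom_altdef)
  have "coprime [:0,1:] [:1,-1::real:]"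
    by (rule coprime_lin[where u=1 and v=1]) simp
  then have c1: "coprime ([:0,1:]^k) ([:1,-1:]^k :: real poly)" by simp
  have c2: "coprime ([:0,1:]^k * [:1,-1:]^k) ([:1,1:]^k :: real poly)"
  proof -
    have "coprime [:0,1:] [:1,1::real:]"
      by (rule coprime_lin[where u="-1" and v=1]) simp
    then have "coprime ([:0,1:]^k) ([:1,1:]^k :: real poly)" by simp
    moreover have "coprime [:1,-1:] [:1,1::real:]"
      by (rule coprime_lin[where u="1/2" and v="1/2"]) simp
    then have "coprime ([:1,-1:]^k) ([:1,1:]^k :: real poly)" by simp
    ultimately show ?thesis by simp
  qed
  have "[:0,1:]^k * [:1,-1:]^k dvd p" using divides_mult[OF d0 d1 c1] .
  then have "[:0,1:]^k * [:1,-1:]^k * [:1,1:]^k dvd p" using divides_mult[OF _ d2 c2] by blast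
  then have "degree ([:0,1:]^k * [:1,-1:]^k * [:1,1:]^k :: real poly) \<le> degree p"
    using pnz by (intro dvd_imp_degree_le)
  moreover have "degree ([:0,1:]^k * [:1,-1:]^k * [:1,1:]^k :: real poly) = 3*k"
    by (simp add: degree_mult_eq degree_power_eq)
  ultimately show False using deg nk by simp
qed



definition intp :: "real poly \<Rightarrow> bool" where "intp h \<longleftrightarrow> (\<forall>i. coeff h i \<in> \<int>)"
definition evp :: "real poly \<Rightarrow> bool" where "evp h \<longleftrightarrow> (\<forall>i. odd i \<longrightarrow> coeff h i = 0)"
definition Nine :: "real poly \<Rightarrow> bool" where
  "Nine q \<longleftrightarrow> (\<exists>E. intp E \<and> coeff E 0 = 0 \<and> q = 1 + smult 9 E)"

lemma intp_mult: "intp p \<Longrightarrow> intp q \<Longrightarrow> intp (p * q)"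
  unfolding intp_def coeff_mult by (auto intro!: Ints_sum Ints_mult)

lemma intp_power: "intp p \<Longrightarrow> intp (p ^ j)"
proof (induction j)
  case 0 then show ?case by (simp add: intp_def coeff_1)
next
  case (Suc j) then show ?case by (simp add: intp_mult)
qed

lemma intp_add: "intp p \<Longrightarrow> intp q \<Longrightarrow> intp (p + q)"
  unfolding intp_def by (auto intro!: Ints_add)

lemma intp_diff: "intp p \<Longrightarrow> intp q \<Longrightarrow> intp (p - q)"
  unfolding intp_def by (auto intro!: Ints_diff)

lemma intp_smult: "c \<in> \<int> \<Longrightarrow> intp p \<Longrightarrow> intp (smult c p)"
  unfolding intp_def by (auto intro!: Ints_mult)

lemma evp_mult: "evp p \<Longrightarrow> evp q \<Longrightarrow> evp (p * q)"
  unfolding evp_def coeff_mult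
proof (intro allI impI sum.neutral ballI)
  fix i j :: nat assume p: "\<forall>i. odd i \<longrightarrow> coeff p i = 0" and q: "\<forall>i. odd i \<longrightarrow> coeff q i = 0"
    and i: "odd i" and j: "j \<in> {..i}"
  then have "odd j \<or> odd (i - j)" by (metis atMost_iff le_add_diff_inverse even_add)
  then show "coeff p j * coeff q (i - j) = 0" using p q by (metis mult_zero_left mult_zero_right)
qed

lemma evp_power: "evp p \<Longrightarrow> evp (p ^ j)"
proof (induction j)
  case 0 then show ?case by (auto simp: evp_def coeff_1 odd_pos)
next
  case (Suc j) then show ?case by (simp add: evp_mult)
qed

lemma evp_diff: "evp p \<Longrightarrow> evp q \<Longrightarrow> evp (p - q)"
  unfolding evp_def by auto

lemma evp_smult: "evp p \<Longrightarrow> evp (smult c p)"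
  unfolding evp_def by auto

lemma Inv_mult:
  assumes P: "Inv a p" and Q: "Inv b q" shows "Inv (a + b) (p * q)"
  unfolding Inv_def
proof (intro allI impI)
  fix t :: real assume t: "1 + 3*t \<noteq> 0"
  define s where "s = (1 - t) / (1 + 3 * t)"
  have "2^(a+b) * poly (p*q) t = (2^a * poly p t) * (2^b * poly q t)"
    by (simp add: power_add algebra_simps)
  also have "\<dots> = ((1+3*t)^a * poly p s) * ((1+3*t)^b * poly q s)"
    using P Q t by (simp add: Inv_def s_def)
  also have "\<dots> = (1+3*t)^(a+b) * poly (p*q) s" by (simp add: power_add algebra_simps)
  finally show "2^(a+b) * poly (p*q) t = (1+3*t)^(a+b) * poly (p*q) ((1 - t) / (1 + 3 * t))"
    by (simp add: s_def)
qed

lemma Inv_power: "Inv a p \<Longrightarrow> Inv (a * j) (p ^ j)"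
proof (induction j)
  case 0 then show ?case by (simp add: Inv_def)
next
  case (Suc j)
  then have "Inv (a + a * j) (p * p ^ j)" by (intro Inv_mult)
  then show ?case by (simp add: algebra_simps)
qed

lemma Inv_diff_smult: "Inv n p \<Longrightarrow> Inv n q \<Longrightarrow> Inv n (p - smult c q)"
  unfolding Inv_def by (auto simp: algebra_simps)

definition ff :: "real poly" where "ff = [:1,0,3:]"
definition gg :: "real poly" where "gg = monom 1 2 * [:1,0,-1:]^2"

lemma r1: "(a::real)^2 * (1 + s*(0 + s*3)) = a^2 + 3*(s*a)^2"
  by algebra
lemma r2: "(a::real)^6 * (s^2 * (1 - s^2)^2) = (s*a)^2 * (a^2 - (s*a)^2)^2"
  by algebra

lemma Inv_ff: "Inv 2 ff"
  unfolding Inv_def ff_def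
proof (intro allI impI)
  fix t :: real assume t: "1 + 3*t \<noteq> 0"
  define s where "s = (1 - t) / (1 + 3 * t)"
  have hs: "s * (1+3*t) = 1 - t" using t by (simp add: s_def)
  have pf: "poly [:1,0,3:] x = 1 + 3*x^2" for x :: real by (simp add: power2_eq_square)
  have "(1 + 3 * t) ^ 2 * poly [:1, 0, 3:] s = (1+3*t)^2 + 3*(s*(1+3*t))^2"
    unfolding pf by algebra
  also have "\<dots> = 2^2 * poly [:1, 0, 3:] t" unfolding hs by (simp add: algebra_simps power2_eq_square)
  finally show "2 ^ 2 * poly [:1, 0, 3:] t = (1 + 3 * t) ^ 2 * poly [:1, 0, 3:] ((1 - t) / (1 + 3 * t))"
    by (simp add: s_def)
qed

lemma Inv_gg: "Inv 6 gg"
  unfolding Inv_def gg_def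
proof (intro allI impI)
  fix t :: real assume t: "1 + 3*t \<noteq> 0"
  define s where "s = (1 - t) / (1 + 3 * t)"
  have hs: "s * (1+3*t) = 1 - t" using t by (simp add: s_def)
  have pe: "poly (monom 1 2 * [:1,0,-1:]^2) x = x^2 * (1 - x^2)^2" for x :: real
    by (simp add: poly_monom power2_eq_square algebra_simps)
  have "(1 + 3 * t) ^ 6 * poly (monom 1 2 * [:1,0,-1:]^2) s = (s*(1+3*t))^2 * ((1+3*t)^2 - (s*(1+3*t))^2)^2"
    unfolding pe by (rule r2)
  also have "\<dots> = 2^6 * poly (monom 1 2 * [:1,0,-1:]^2) t" unfolding hs pe by algebra
  finally show "2 ^ 6 * poly (monom 1 2 * [:1,0,-1:]^2) t =
     (1 + 3 * t) ^ 6 * poly (monom 1 2 * [:1,0,-1:]^2) ((1 - t) / (1 + 3 * t))"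
    by (simp add: s_def)
qed

lemma evp_ff: "evp ff"
  unfolding evp_def ff_def by (auto simp: coeff_pCons split: nat.split)

lemma evp_gg: "evp gg"
proof -
  have "evp (monom 1 2)" by (auto simp: evp_def coeff_monom)
  moreover have "evp [:1,0,-1:]" by (auto simp: evp_def coeff_pCons split: nat.split)
  ultimately show ?thesis unfolding gg_def by (intro evp_mult evp_power)
qed

lemma intp_ff: "intp ff"
  unfolding intp_def ff_def by (auto simp: coeff_pCons split: nat.split)

lemma intp_gg: "intp gg"
proof -
  have "intp (monom 1 2)" by (auto simp: intp_def coeff_monom)
  moreover have "intp [:1,0,-1:]" by (auto simp: intp_def coeff_pCons split: nat.split)
  ultimately show ?thesis unfolding gg_def by (intro intp_mult intp_power)
qed

lemma deg_ff: "degree ff = 2" by (simp add: ff_def)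
lemma deg_gg: "degree gg \<le> 6"
proof -
  have "degree gg \<le> degree (monom 1 2 :: real poly) + degree ([:1,0,-1:]^2 :: real poly)"
    unfolding gg_def by (rule degree_mult_le)
  also have "\<dots> \<le> 2 + 2 * 2"
    by (intro add_mono degree_power_le[THEN order_trans]) (auto simp: degree_monom_eq)
  finally show ?thesis by simp
qed

lemma ff3: "ff ^ 3 = 1 + smult 9 [:0,0,1,0,3,0,3:]"
  by (simp add: ff_def eval_nat_numeral one_pCons)

lemma Nine_mult: "Nine p \<Longrightarrow> Nine q \<Longrightarrow> Nine (p * q)"
proof -
  assume "Nine p" "Nine q"
  then obtain E F where E: "intp E" "coeff E 0 = 0" "p = 1 + smult 9 E"
    and F: "intp F" "coeff F 0 = 0" "q = 1 + smult 9 F" by (auto simp: Nine_def)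
  have "p * q = 1 + smult 9 (E + F + smult 9 (E * F))"
    using E F by (simp add: algebra_simps smult_add_right)
  moreover have "intp (E + F + smult 9 (E * F))"
    using E F by (intro intp_add intp_smult intp_mult) auto
  moreover have "coeff (E + F + smult 9 (E * F)) 0 = 0"
    using E F by (simp add: coeff_mult)
  ultimately show ?thesis unfolding Nine_def by blast
qed

lemma Nine_power: "Nine p \<Longrightarrow> Nine (p ^ j)"
proof (induction j)
  case 0 then show ?case unfolding Nine_def by (intro exI[of _ 0]) (auto simp: intp_def)
next
  case (Suc j) then show ?case by (simp add: Nine_mult)
qed

lemma Nine_ff: "Nine (ff ^ (3*m))"
proof -
  have "Nine (ff^3)" unfolding ff3 Nine_def
    by (intro exI[of _ "[:0,0,1,0,3,0,3:]"]) (auto simp: intp_def coeff_pCons split: nat.split)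
  then have "Nine ((ff^3)^m)" by (rule Nine_power)
  then show ?thesis by (simp add: power_mult)
qed



lemma hh_props:
  assumes km: "Suc k \<le> m"
  defines "h \<equiv> gg^(Suc k) * ff^(3*(m - Suc k))"
  shows "Inv (6*m) h" "degree h \<le> 6*m" "evp h" "intp h"
    "\<And>i. i < 2*Suc k \<Longrightarrow> coeff h i = 0" "coeff h (2*Suc k) = 1"
proof -
  have e: "6 * Suc k + 2 * (3 * (m - Suc k)) = 6*m" using km by simp
  have "Inv (6 * Suc k + 2 * (3 * (m - Suc k))) h"
    unfolding h_def by (intro Inv_mult Inv_power Inv_gg Inv_ff)
  then show "Inv (6*m) h" by (simp only: e)
  have "degree h \<le> degree (gg^(Suc k)) + degree (ff^(3*(m - Suc k)))"
    unfolding h_def by (rule degree_mult_le)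
  also have "\<dots> \<le> 6 * Suc k + 2 * (3 * (m - Suc k))"
  proof (intro add_mono)
    show "degree (gg ^ Suc k) \<le> 6 * Suc k"
      using degree_power_le[of gg "Suc k"] deg_gg
      by (metis (no_types, lifting) le_trans mult.commute mult_le_mono1)
    show "degree (ff ^ (3 * (m - Suc k))) \<le> 2 * (3 * (m - Suc k))"
      using degree_power_le[of ff "3 * (m - Suc k)"] deg_ff by simp
  qed
  finally show "degree h \<le> 6*m" by (simp only: e)
  show "evp h" unfolding h_def by (intro evp_mult evp_power evp_gg evp_ff)
  show "intp h" unfolding h_def by (intro intp_mult intp_power intp_gg intp_ff)
  define R where "R = [:1,0,-1:]^(2 * Suc k) * ff^(3*(m - Suc k))"
  have g1: "gg^(Suc k) = monom 1 (2 * Suc k) * [:1,0,-1:]^(2 * Suc k)"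
    unfolding gg_def power_mult_distrib monom_power power_mult[symmetric] by simp
  have hR: "h = monom 1 (2 * Suc k) * R"
    unfolding h_def R_def g1 by (simp only: mult.assoc)
  have R0: "coeff R 0 = 1"
  proof -
    have "coeff R 0 = poly R 0" by (simp add: poly_0_coeff_0)
    also have "\<dots> = 1" by (simp add: R_def ff_def)
    finally show ?thesis .
  qed
  show "\<And>i. i < 2*Suc k \<Longrightarrow> coeff h i = 0" unfolding hR by (simp add: coeff_monom_mult)
  show "coeff h (2*Suc k) = 1" unfolding hR using R0 by (simp add: coeff_monom_mult)
qed

lemma constr:
  "k \<le> m \<Longrightarrow> \<exists>q. Nine q \<and> Inv (6*m) q \<and> degree q \<le> 6*m \<and> evp q \<and>
      (\<forall>i. 1 \<le> i \<and> i \<le> 2*k \<longrightarrow> coeff q i = 0)"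
proof (induction k)
  case 0
  have "Inv (2*(3*m)) (ff^(3*m))" by (intro Inv_power Inv_ff)
  moreover have "degree (ff^(3*m)) \<le> 6*m"
    using degree_power_le[of ff "3*m"] deg_ff by simp
  ultimately show ?case using Nine_ff evp_power[OF evp_ff]
    by (intro exI[of _ "ff^(3*m)"]) auto
next
  case (Suc k)
  then obtain q where q: "Nine q" "Inv (6*m) q" "degree q \<le> 6*m" "evp q"
      "\<forall>i. 1 \<le> i \<and> i \<le> 2*k \<longrightarrow> coeff q i = 0" by auto
  from q(1) obtain E where E: "intp E" "coeff E 0 = 0" "q = 1 + smult 9 E"
    by (auto simp: Nine_def)
  define h where "h = gg^(Suc k) * ff^(3*(m - Suc k))"
  note H = hh_props[OF Suc.prems, folded h_def]
  define b where "b = coeff E (2 * Suc k)"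
  have bZ: "b \<in> \<int>" using E(1) by (simp add: intp_def b_def)
  define q' where "q' = q - smult (9*b) h"
  have "Nine q'"
  proof -
    have "q' = 1 + smult 9 (E - smult b h)" by (simp add: q'_def E(3) smult_diff_right)
    moreover have "intp (E - smult b h)" using E(1) H(4) bZ by (intro intp_diff intp_smult)
    moreover have "coeff (E - smult b h) 0 = 0" using E(2) H(5)[of 0] by simp
    ultimately show ?thesis unfolding Nine_def by blast
  qed
  moreover have "Inv (6*m) q'" unfolding q'_def by (intro Inv_diff_smult q(2) H(1))
  moreover have "degree q' \<le> 6*m"
    unfolding q'_def using q(3) H(2)
    by (metis degree_diff_le degree_smult_le le_trans)
  moreover have "evp q'" unfolding q'_def by (intro evp_diff evp_smult q(4) H(3))
  moreover have "\<forall>i. 1 \<le> i \<and> i \<le> 2*Suc k \<longrightarrow> coeff q' i = 0"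
  proof (intro allI impI)
    fix i assume i: "1 \<le> i \<and> i \<le> 2*Suc k"
    have "i \<le> 2*k \<or> i = 2*k+1 \<or> i = 2 * Suc k" using i by auto
    then consider "i \<le> 2*k" | "i = 2*k+1" | "i = 2 * Suc k" by blast
    then show "coeff q' i = 0"
    proof cases
      case 1 then show ?thesis using i q(5) H(5)[of i] by (simp add: q'_def)
    next
      case 2 then show ?thesis using q(4) H(3) by (simp add: q'_def evp_def)
    next
      case 3 then show ?thesis using H(6) by (simp add: q'_def E(3) b_def coeff_1)
    qed
  qed
  ultimately show ?case by blast
qed



lemma UNIV_f4: "(UNIV :: f4 set) = {F0, F1, Fw, Fw2}"
proof -
  have "x \<in> {F0, F1, Fw, Fw2}" for x by (cases x) auto
  then show ?thesis by auto
qed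

lemma finite_f4[simp]: "finite (UNIV :: f4 set)" by (simp add: UNIV_f4)

lemma f4_0: "(0::f4) = F0" by (simp add: zero_f4_def)
lemma f4_1: "(1::f4) = F1" by (simp add: one_f4_def)
lemma f4_add_self: "(a::f4) + a = 0"
  by (cases a) (simp_all add: plus_f4_def zero_f4_def)

lemma f4_of_nat: "(of_nat w :: f4) = (if even w then 0 else 1)"
proof (induction w)
  case 0 then show ?case by simp
next
  case (Suc w) then show ?case
    by (simp add: f4_add_self)
qed

definition chi :: "f4 \<Rightarrow> real" where
  "chi a = (if a = F0 \<or> a = F1 then 1 else -1)"

lemma chi_add: "chi (a + b) = chi a * chi b"
  by (cases a; cases b) (simp_all add: chi_def plus_f4_def)

lemma chi_0: "chi 0 = 1" by (simp add: chi_def zero_f4_def)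

lemma chi_sum: "finite A \<Longrightarrow> chi (\<Sum>k\<in>A. f k) = (\<Prod>k\<in>A. chi (f k))"
  by (induction A rule: finite_induct) (simp_all add: chi_0 chi_add)

definition ext0 :: "nat \<Rightarrow> (nat \<Rightarrow> f4) \<Rightarrow> nat \<Rightarrow> f4" where
  "ext0 n g = (\<lambda>k. if k < n then g k else 0)"

lemma bij_ext0: "bij_betw (ext0 n) (PiE {..<n} (\<lambda>_. UNIV)) (vecs n)"
proof (rule bij_betwI[where g="\<lambda>u. restrict u {..<n}"])
  show "ext0 n \<in> PiE {..<n} (\<lambda>_. UNIV) \<rightarrow> vecs n"
    by (auto simp: ext0_def vecs_def)
  show "(\<lambda>u. restrict u {..<n}) \<in> vecs n \<rightarrow> PiE {..<n} (\<lambda>_. UNIV)" by auto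
  show "restrict (ext0 n g) {..<n} = g" if "g \<in> PiE {..<n} (\<lambda>_. UNIV)" for g
    using that by (auto simp: ext0_def fun_eq_iff PiE_def extensional_def)
  show "ext0 n (restrict u {..<n}) = u" if "u \<in> vecs n" for u
    using that by (auto simp: ext0_def fun_eq_iff vecs_def)
qed

lemma finite_vecs: "finite (vecs n)"
proof -
  have "finite (PiE {..<n} (\<lambda>_. UNIV :: f4 set))" by (intro finite_PiE) auto
  then show ?thesis using bij_betw_finite[OF bij_ext0] by blast
qed

lemma sum_prod_vecs:
  fixes G :: "nat \<Rightarrow> f4 \<Rightarrow> real"
  shows "(\<Sum>u\<in>vecs n. \<Prod>k<n. G k (u k)) = (\<Prod>k<n. \<Sum>a\<in>UNIV. G k a)"
proof -
  have "(\<Prod>k<n. \<Sum>a\<in>UNIV. G k a) = (\<Sum>g\<in>PiE {..<n} (\<lambda>_. UNIV). \<Prod>k<n. G k (g k))"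
    by (rule prod_sum_PiE) auto
  also have "\<dots> = (\<Sum>g\<in>PiE {..<n} (\<lambda>_. UNIV). \<Prod>k<n. G k (ext0 n g k))"
    by (intro sum.cong refl prod.cong) (auto simp: ext0_def)
  also have "\<dots> = (\<Sum>u\<in>vecs n. \<Prod>k<n. G k (u k))"
    using sum.reindex_bij_betw[OF bij_ext0, of "\<lambda>u. \<Prod>k<n. G k (u k)"] by simp
  finally show ?thesis by simp
qed

lemma prod_if_wt:
  "(\<Prod>k<n. if u k = 0 then A else B) = A^(n - wt n u) * (B::real)^(wt n u)"
proof -
  have "(\<Prod>k<n. if u k = 0 then A else B) =
      (\<Prod>k\<in>{..<n} \<inter> {k. u k = 0}. A) * (\<Prod>k\<in>{..<n} \<inter> - {k. u k = 0}. B)"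
    by (rule prod.If_cases) simp
  also have "\<dots> = A ^ card ({..<n} \<inter> {k. u k = 0}) * B ^ card ({..<n} \<inter> - {k. u k = 0})"
    by simp
  also have "card ({..<n} \<inter> - {k. u k = 0}) = wt n u"
    unfolding wt_def by (intro arg_cong[where f=card]) auto
  also have "card ({..<n} \<inter> {k. u k = 0}) = n - wt n u"
  proof -
    have "{..<n} \<inter> {k. u k = 0} = {..<n} - {k. k < n \<and> u k \<noteq> 0}" by auto
    moreover have S: "{k. k < n \<and> u k \<noteq> 0} \<subseteq> {..<n}" by auto
    moreover have "finite {k. k < n \<and> u k \<noteq> 0}" by auto
    ultimately show ?thesis unfolding wt_def using card_Diff_subset[of "{k. k < n \<and> u k \<noteq> 0}" "{..<n}"] by simp
  qed
  finally show ?thesis .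
qed

lemma wt_le: "wt n u \<le> n"
proof -
  have "wt n u \<le> card {..<n}" unfolding wt_def by (intro card_mono) auto
  then show ?thesis by simp
qed

lemma herm_ip_lin:
  "herm_ip n (\<lambda>k. x k + b * y k) u = herm_ip n x u + b * herm_ip n y u"
  unfolding herm_ip_def by (simp add: sum.distrib sum_distrib_left algebra_simps)



lemma orth:
  assumes sd: "herm_self_dual n C" and u: "u \<in> vecs n"
  shows "(\<Sum>c\<in>C. chi (herm_ip n c u)) = (if u \<in> C then real (card C) else 0)"
proof (cases "u \<in> C")
  case True
  then have "u \<in> herm_dual n C" using sd by (simp add: herm_self_dual_def)
  then have "\<forall>c\<in>C. herm_ip n c u = 0" by (simp add: herm_dual_def)
  then show ?thesis using True by (simp add: chi_0)
next
  case False
  have code: "is_code n C" using sd by (simp add: herm_self_dual_def)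
  have "u \<notin> herm_dual n C" using sd False by (simp add: herm_self_dual_def)
  then obtain c0 where c0: "c0 \<in> C" "herm_ip n c0 u \<noteq> 0" using u by (auto simp: herm_dual_def)
  define \<tau> where "\<tau> = herm_ip n c0 u"
  define b where "b = Fw * inverse \<tau>"
  have bt: "b * \<tau> = Fw" using c0(2) by (simp add: b_def \<tau>_def)
  define \<phi> where "\<phi> = (\<lambda>c. (\<lambda>k. c k + b * c0 k))"
  have \<phi>C: "\<phi> c \<in> C" if "c \<in> C" for c
  proof -
    have h: "(\<lambda>k. b * c0 k) \<in> C" using code c0(1) by (simp add: is_code_def)
    have add: "\<forall>x\<in>C. \<forall>y\<in>C. (\<lambda>k. x k + y k) \<in> C" using code by (simp add: is_code_def)
    have "(\<lambda>k. c k + (\<lambda>k. b * c0 k) k) \<in> C" using bspec[OF bspec[OF add that] h] .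
    then show ?thesis by (simp add: \<phi>_def)
  qed
  have \<phi>\<phi>: "\<phi> (\<phi> c) = c" for c
    by (simp add: \<phi>_def add.assoc f4_add_self)
  have "(\<Sum>c\<in>C. chi (herm_ip n c u)) = (\<Sum>c\<in>C. chi (herm_ip n (\<phi> c) u))"
    by (rule sum.reindex_bij_witness[where i=\<phi> and j=\<phi>]) (auto simp: \<phi>\<phi> \<phi>C)
  also have "\<dots> = (\<Sum>c\<in>C. chi (herm_ip n c u) * chi Fw)"
    by (simp add: \<phi>_def herm_ip_lin chi_add bt[unfolded \<tau>_def])
  also have "\<dots> = - (\<Sum>c\<in>C. chi (herm_ip n c u))"
    by (simp add: chi_def sum_negf)
  finally show ?thesis using False by simp
qed

lemma char_sum:
  fixes x y :: real
  shows "(\<Sum>a\<in>UNIV. chi (ck * a^2) * (if a = 0 then x else y)) =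
     (if ck = 0 then x + 3*y else x - y)"
  by (cases ck) (simp_all add: UNIV_f4 chi_def power2_eq_square times_f4_def zero_f4_def)

lemma macw:
  fixes x y :: real
  assumes sd: "herm_self_dual n C"
  shows "real (card C) * (\<Sum>c\<in>C. x^(n - wt n c) * y^(wt n c)) =
         (\<Sum>c\<in>C. (x+3*y)^(n - wt n c) * (x-y)^(wt n c))"
proof -
  have code: "is_code n C" using sd by (simp add: herm_self_dual_def)
  then have CV: "C \<subseteq> vecs n" by (simp add: is_code_def)
  define M where "M u = x^(n - wt n u) * y^(wt n u)" for u
  have "real (card C) * (\<Sum>c\<in>C. M c) = (\<Sum>u\<in>vecs n. (if u \<in> C then real (card C) else 0) * M u)"
  proof -
    have "(\<Sum>u\<in>vecs n. (if u \<in> C then real (card C) else 0) * M u) =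
        (\<Sum>u\<in>vecs n. if u \<in> C then real (card C) * M u else 0)"
      by (intro sum.cong) auto
    also have "\<dots> = (\<Sum>u\<in>vecs n \<inter> C. real (card C) * M u)"
      by (simp add: sum.inter_restrict[OF finite_vecs])
    also have "vecs n \<inter> C = C" using CV by blast
    finally show ?thesis by (simp add: sum_distrib_left)
  qed
  also have "\<dots> = (\<Sum>u\<in>vecs n. (\<Sum>c\<in>C. chi (herm_ip n c u)) * M u)"
    by (intro sum.cong refl) (simp add: orth[OF sd])
  also have "\<dots> = (\<Sum>u\<in>vecs n. \<Sum>c\<in>C. chi (herm_ip n c u) * M u)"
    by (simp add: sum_distrib_right)
  also have "\<dots> = (\<Sum>c\<in>C. \<Sum>u\<in>vecs n. chi (herm_ip n c u) * M u)"
    by (rule sum.swap)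
  also have "\<dots> = (\<Sum>c\<in>C. (x+3*y)^(n - wt n c) * (x-y)^(wt n c))"
  proof (intro sum.cong refl)
    fix c
    have "(\<Sum>u\<in>vecs n. chi (herm_ip n c u) * M u) =
        (\<Sum>u\<in>vecs n. \<Prod>k<n. chi (c k * (u k)^2) * (if u k = 0 then x else y))"
    proof (intro sum.cong refl)
      fix u
      have "chi (herm_ip n c u) = (\<Prod>k<n. chi (c k * (u k)^2))"
        unfolding herm_ip_def by (simp add: chi_sum)
      moreover have "M u = (\<Prod>k<n. if u k = 0 then x else y)"
        by (simp add: M_def prod_if_wt)
      ultimately show "chi (herm_ip n c u) * M u =
          (\<Prod>k<n. chi (c k * (u k)^2) * (if u k = 0 then x else y))"
        by (simp add: prod.distrib)
    qed
    also have "\<dots> = (\<Prod>k<n. \<Sum>a\<in>UNIV. chi (c k * a^2) * (if a = 0 then x else y))"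
      by (rule sum_prod_vecs)
    also have "\<dots> = (\<Prod>k<n. if c k = 0 then x + 3*y else x - y)"
      by (simp add: char_sum)
    also have "\<dots> = (x+3*y)^(n - wt n c) * (x-y)^(wt n c)"
      by (rule prod_if_wt)
    finally show "(\<Sum>u\<in>vecs n. chi (herm_ip n c u) * M u) = (x+3*y)^(n - wt n c) * (x-y)^(wt n c)" .
  qed
  finally show ?thesis by (simp add: M_def)
qed

lemma even_wt:
  assumes sd: "herm_self_dual n C" and c: "c \<in> C"
  shows "even (wt n c)"
proof -
  have "c \<in> herm_dual n C" using sd c by (simp add: herm_self_dual_def)
  then have z: "herm_ip n c c = 0" using c by (simp add: herm_dual_def)
  have cube: "a * a^2 = (if a = 0 then 0 else (1::f4))" for a :: f4
    by (cases a) (simp_all add: power2_eq_square times_f4_def zero_f4_def one_f4_def)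
  have "herm_ip n c c = (\<Sum>k<n. if c k = 0 then 0 else (1::f4))"
    unfolding herm_ip_def by (simp add: cube)
  also have "\<dots> = (\<Sum>k<n. if c k \<noteq> 0 then 1 else 0)"
    by (intro sum.cong) auto
  also have "\<dots> = (\<Sum>k\<in>{k \<in> {..<n}. c k \<noteq> 0}. 1)"
    by (rule sum.inter_filter[symmetric]) simp
  also have "{k \<in> {..<n}. c k \<noteq> 0} = {k. k < n \<and> c k \<noteq> 0}" by auto
  also have "(\<Sum>k\<in>{k. k < n \<and> c k \<noteq> 0}. (1::f4)) = of_nat (wt n c)" by (simp add: wt_def)
  finally have "(of_nat (wt n c) :: f4) = 0" using z by simp
  then show ?thesis by (simp add: f4_of_nat split: if_splits)
qed

lemma card_code:
  assumes sd: "herm_self_dual n C"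
  shows "real (card C) = 2^n"
proof -
  have code: "is_code n C" using sd by (simp add: herm_self_dual_def)
  then have fin: "finite C" using finite_vecs finite_subset by (auto simp: is_code_def)
  have ne: "C \<noteq> {}" using code by (auto simp: is_code_def)
  define F where "F x y = (\<Sum>c\<in>C. x^(n - wt n c) * y^(wt n c))" for x y :: real
  have mw: "real (card C) * F x y = F (x+3*y) (x-y)" for x y
    unfolding F_def by (rule macw[OF sd])
  have F4: "F (4*x) (4*y) = 4^n * F x y" for x y
  proof -
    have "F (4*x) (4*y) = (\<Sum>c\<in>C. 4^n * (x^(n - wt n c) * y^(wt n c)))"
      unfolding F_def
    proof (intro sum.cong refl)
      fix c
      have "(4::real)^n = 4^(n - wt n c) * 4^(wt n c)"
        using wt_le[of n c] by (simp add: power_add[symmetric])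
      then show "(4*x)^(n - wt n c) * (4*y)^(wt n c) = 4^n * (x^(n - wt n c) * y^(wt n c))"
        by (simp add: power_mult_distrib)
    qed
    then show ?thesis by (simp add: F_def sum_distrib_left)
  qed
  have F11: "F 1 1 = real (card C)" by (simp add: F_def)
  have "real (card C) * (real (card C) * F 1 1) = real (card C) * F 4 0"
    using mw[of 1 1] by simp
  also have "\<dots> = F 4 4" using mw[of 4 0] by simp
  also have "\<dots> = 4^n * F 1 1" using F4[of 1 1] by simp
  finally have "real (card C) * real (card C) = 4^n"
    using F11 fin ne by (simp add: card_gt_0_iff)
  then have "real (card C)^2 = (2^n)^2"
    by (simp add: power2_eq_square power_mult_distrib[symmetric])
  then show ?thesis by (simp add: power2_eq_iff_nonneg)
qed



lemma wt_zero_iff: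
  assumes "c \<in> vecs n"
  shows "wt n c = 0 \<longleftrightarrow> c = (\<lambda>_. 0)"
proof
  assume "wt n c = 0"
  then have "{k. k < n \<and> c k \<noteq> 0} = {}" unfolding wt_def by simp
  then show "c = (\<lambda>_. 0)" using assms by (auto simp: vecs_def fun_eq_iff) (metis not_le)
next
  assume "c = (\<lambda>_. 0)" then show "wt n c = 0" by (simp add: wt_def)
qed

theorem corollary3p6:
  fixes m :: nat and D :: "(nat \<Rightarrow> f4) set"
  assumes "m > 0"
    and "extremal_herm_sd (6 * m) D"
  shows "\<forall>i. m + 1 \<le> i \<and> i \<le> 3 * m \<longrightarrow> weight_count (6 * m) D (2 * i) mod 9 = 0"
proof -
  define n where "n = 6 * m"
  have sd: "herm_self_dual n D" and mw: "min_weight n D = 2*m + 2"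
    using assms(2) by (simp_all add: extremal_herm_sd_def n_def)
  have code: "is_code n D" using sd by (simp add: herm_self_dual_def)
  have DV: "D \<subseteq> vecs n" using code by (simp add: is_code_def)
  have fin: "finite D" using finite_vecs DV finite_subset by blast
  have zD: "(\<lambda>_. 0) \<in> D" using code by (simp add: is_code_def)
  have big: "2*m + 2 \<le> wt n c" if "c \<in> D" "c \<noteq> (\<lambda>_. 0)" for c
  proof -
    have "min_weight n D \<le> wt n c" unfolding min_weight_def
      using that fin by (intro Min_le) auto
    then show ?thesis using mw by simp
  qed
  define Wp :: "real poly" where "Wp = (\<Sum>c\<in>D. monom 1 (wt n c))"
  have cW: "coeff Wp w = real (weight_count n D w)" for w
  proof -
    have "coeff Wp w = (\<Sum>c\<in>D. if wt n c = w then 1 else 0)"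
      by (simp add: Wp_def coeff_sum coeff_monom)
    also have "\<dots> = (\<Sum>c\<in>{c \<in> D. wt n c = w}. 1)"
      by (rule sum.inter_filter[symmetric, OF fin])
    also have "\<dots> = real (weight_count n D w)" by (simp add: weight_count_def)
    finally show ?thesis .
  qed
  have wc0: "weight_count n D 0 = 1"
  proof -
    have "{c \<in> D. wt n c = 0} = {(\<lambda>_. 0)}"
      using wt_zero_iff DV zD by auto
    then show ?thesis by (simp add: weight_count_def)
  qed
  have wclow: "weight_count n D i = 0" if "1 \<le> i" "i \<le> 2*m" for i
  proof -
    have e: "{c \<in> D. wt n c = i} = {}"
    proof (rule ccontr)
      assume "{c \<in> D. wt n c = i} \<noteq> {}"
      then obtain c where c: "c \<in> D" "wt n c = i" by auto
      show False
      proof (cases "c = (\<lambda>_. 0)")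
        case True then show False using c that by (simp add: wt_def)
      next
        case False then show False using big[OF c(1)] c that by simp
      qed
    qed
    then show ?thesis unfolding weight_count_def e by simp
  qed
  have wcodd: "weight_count n D i = 0" if "odd i" for i
  proof -
    have e: "{c \<in> D. wt n c = i} = {}" using even_wt[OF sd] that by auto
    then show ?thesis unfolding weight_count_def e by simp
  qed
  have wchigh: "weight_count n D i = 0" if "n < i" for i
  proof -
    have e: "{c \<in> D. wt n c = i} = {}" using wt_le[of n] that by (auto simp: not_le[symmetric])
    then show ?thesis unfolding weight_count_def e by simp
  qed
  have degW: "degree Wp \<le> n"
    by (rule degree_le) (simp add: cW wchigh)
  have invW: "Inv n Wp"
    unfolding Inv_def
  proof (intro allI impI)
    fix t :: real assume t: "1 + 3*t \<noteq> 0"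
    define s where "s = (1 - t) / (1 + 3*t)"
    have "2^n * poly Wp t = real (card D) * (\<Sum>c\<in>D. 1^(n - wt n c) * t^(wt n c))"
      by (simp add: Wp_def poly_sum poly_monom card_code[OF sd])
    also have "\<dots> = (\<Sum>c\<in>D. (1+3*t)^(n - wt n c) * (1-t)^(wt n c))"
      by (rule macw[OF sd])
    also have "\<dots> = (\<Sum>c\<in>D. (1+3*t)^n * s^(wt n c))"
    proof (intro sum.cong refl)
      fix c
      have "(1+3*t)^n = (1+3*t)^(n - wt n c) * (1+3*t)^(wt n c)"
        using wt_le[of n c] by (simp add: power_add[symmetric])
      then show "(1+3*t)^(n - wt n c) * (1-t)^(wt n c) = (1+3*t)^n * s^(wt n c)"
        using t by (simp add: s_def power_divide)
    qed
    also have "\<dots> = (1+3*t)^n * poly Wp s"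
      by (simp add: Wp_def poly_sum poly_monom sum_distrib_left)
    finally show "2^n * poly Wp t = (1+3*t)^n * poly Wp ((1 - t) / (1 + 3*t))"
      by (simp add: s_def)
  qed
  obtain q where q: "Nine q" "Inv (6*m) q" "degree q \<le> 6*m" "evp q"
      "\<forall>i. 1 \<le> i \<and> i \<le> 2*m \<longrightarrow> coeff q i = 0"
    using constr[of m m] by auto
  from q(1) obtain E where E: "intp E" "coeff E 0 = 0" "q = 1 + smult 9 E"
    by (auto simp: Nine_def)
  have "Wp - smult 1 q = 0"
  proof (rule uniq[where n=n and k="2*m+1"])
    show "Inv n (Wp - smult 1 q)" using invW q(2) by (intro Inv_diff_smult) (simp_all add: n_def)
    show "degree (Wp - smult 1 q) \<le> n" using degW q(3)
      by (simp add: n_def) (metis degree_diff_le)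
    show "coeff (Wp - smult 1 q) i = 0" if "odd i" for i
      using q(4) that by (simp add: evp_def cW wcodd)
    show "coeff (Wp - smult 1 q) i = 0" if "i < 2*m+1" for i
    proof (cases "i = 0")
      case True then show ?thesis by (simp add: cW wc0 E(3) E(2))
    next
      case False then show ?thesis using that q(5) by (simp add: cW wclow)
    qed
    show "n < 3 * (2*m+1)" by (simp add: n_def)
  qed
  then have Wq: "Wp = q" by simp
  show ?thesis
  proof (intro allI impI)
    fix i assume i: "m + 1 \<le> i \<and> i \<le> 3 * m"
    have "real (weight_count n D (2*i)) = coeff q (2*i)" using cW Wq by simp
    also have "\<dots> = 9 * coeff E (2*i)" using i by (simp add: E(3) coeff_1)
    finally have eq: "real (weight_count n D (2*i)) = 9 * coeff E (2*i)" .
    obtain z where z: "coeff E (2*i) = of_int z" using E(1) by (auto simp: intp_def elim: Ints_cases)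
    have "real_of_int (int (weight_count n D (2*i))) = real_of_int (9 * z)" using eq z by simp
    then have "int (weight_count n D (2*i)) = 9 * z" by (simp only: of_int_eq_iff)
    then have "(9::int) dvd int (weight_count n D (2*i))" by simp
    then have "9 dvd weight_count n D (2*i)" by presburger
    then show "weight_count (6 * m) D (2 * i) mod 9 = 0" by (simp add: n_def)
  qed
qed

end
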